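(* Let $k\in\mathbb{N}$, let $P$ be the uniform distribution on $[0,1]$, and let $\beta=\{\frac jk:1\leq j\leq k\}$. For $1\le j\le k$ let $J_{k,j}=[\frac{j-1}k,\frac jk]$. Let $n\geq k$ and let $\alpha_n$ be a conditional optimal set of $n$-points for $P$ with respect to $\beta$, where $n=mk+\ell$ with $m\in\mathbb{N}$ and $\ell$ an integer with $0\leq\ell<k$. Then: (i) if $\ell=0$, then $\mathrm{card}(\alpha_n\cap J_{k,1})=m$ and $\mathrm{card}(\alpha_n\cap J_{k,j})=m+1$ for $2\leq j\leq k$; (ii) if $1\leq\ell<k$, then $\mathrm{card}(\alpha_n\cap J_{k,1})=m+1$, $\mathrm{card}(\alpha_n\cap J_{k,j})=m+2$ for $j\in\{j_1,\dots,j_{\ell-1}\}$, and $\mathrm{card}(\alpha_n\cap J_{k,j})=m+1$ for $j\in\{2,\dots,k\}\setminus\{j_1,\dots,j_{\ell-1}\}$, where $\{j_1,\dots,j_{\ell-1}\}$ is some subset of $\ell-1$ elements of $\{2,3,\dots,k\}$.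
   Context: Conditional quantization on $\mathbb{R}$: for a Borel probability measure $P$ on $\mathbb{R}$ and a finite set $\beta\subset\mathbb{R}$ with $\mathrm{card}(\beta)=r$, for $n\geq r$ the $n$th conditional quantization error is $V_n=\inf\{\int\min_{a\in\alpha\cup\beta}(x-a)^2\,dP(x):\alpha\subset\mathbb{R},\ \mathrm{card}(\alpha)\leq n-r\}$. A set $\alpha\cup\beta$ attaining this infimum, such that each $b\in\beta$ has a Voronoi region (set of points at least as close to $b$ as to any other point of $\alpha\cup\beta$) of positive $P$-measure, is a conditional optimal set of $n$-points for $P$ with respect to $\beta$; it contains $\beta$. *)

theory Defs
  imports "HOL-Analysis.Analysis"
begin

definition distortion :: "real measure \<Rightarrow> real set \<Rightarrow> real" where
  "distortion P S = (\<integral>x. Min ((\<lambda>a. (x - a)\<^sup>2) ` S) \<partial>P)"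

definition cond_quant_error :: "real measure \<Rightarrow> real set \<Rightarrow> nat \<Rightarrow> real" where
  "cond_quant_error P \<beta> n =
     (INF \<alpha> \<in> {\<alpha>. finite \<alpha> \<and> card \<alpha> \<le> n - card \<beta>}. distortion P (\<alpha> \<union> \<beta>))"

definition voronoi :: "real set \<Rightarrow> real \<Rightarrow> real set" where
  "voronoi S b = {x. \<forall>a\<in>S. \<bar>x - b\<bar> \<le> \<bar>x - a\<bar>}"

definition cond_optimal_set :: "real measure \<Rightarrow> real set \<Rightarrow> nat \<Rightarrow> real set \<Rightarrow> bool" where
  "cond_optimal_set P \<beta> n \<gamma> \<longleftrightarrow>
     card \<beta> \<le> n \<and>
     (\<exists>\<alpha>. finite \<alpha> \<and> card \<alpha> \<le> n - card \<beta> \<and> \<gamma> = \<alpha> \<union> \<beta>) \<and>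
     distortion P \<gamma> = cond_quant_error P \<beta> n \<and>
     (\<forall>b\<in>\<beta>. measure P (voronoi \<gamma> b) > 0)"

definition unif01 :: "real measure" where
  "unif01 = uniform_measure lborel {0..1}"

definition Jkj :: "nat \<Rightarrow> nat \<Rightarrow> real set" where
  "Jkj k j = {(real j - 1) / real k .. real j / real k}"

end

theory Submission
  imports Defs "HOL-Analysis.Analysis"
begin


definition dmin :: "real set \<Rightarrow> real \<Rightarrow> real" where
  "dmin T x = Min ((\<lambda>a. (x - a)\<^sup>2) ` T)"

lemma dmin_cont: "finite T \<Longrightarrow> T \<noteq> {} \<Longrightarrow> continuous_on UNIV (dmin T)"
proof (induction T rule: finite_ne_induct)
  case (singleton a)
  then show ?case by (simp add: dmin_def continuous_intros)
next
  case (insert a T)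
  have "dmin (insert a T) = (\<lambda>x. min ((x-a)\<^sup>2) (dmin T x))"
    using insert by (auto simp: dmin_def fun_eq_iff)
  then show ?case using insert by (auto intro!: continuous_intros)
qed

lemma dmin_le: "finite T \<Longrightarrow> a \<in> T \<Longrightarrow> dmin T x \<le> (x - a)\<^sup>2"
  unfolding dmin_def by (rule Min_le) auto

lemma dmin_ge: "finite T \<Longrightarrow> T \<noteq> {} \<Longrightarrow> (\<And>a. a \<in> T \<Longrightarrow> c \<le> (x - a)\<^sup>2) \<Longrightarrow> c \<le> dmin T x"
  unfolding dmin_def by (subst Min_ge_iff) auto

lemma dmin_nonneg: "finite T \<Longrightarrow> T \<noteq> {} \<Longrightarrow> 0 \<le> dmin T x"
  by (rule dmin_ge) auto

lemma unif01_eq: "unif01 = density lborel (\<lambda>x. ennreal (indicator {0..1::real} x))"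
  unfolding unif01_def uniform_measure_def
  by simp (intro arg_cong[where f="density lborel"], auto simp: fun_eq_iff split: split_indicator)

lemma integral_unif01:
  fixes f :: "real \<Rightarrow> real"
  assumes "continuous_on UNIV f"
  shows "(\<integral>x. f x \<partial>unif01) = integral {0..1} f"
proof -
  have m: "f \<in> borel_measurable lborel"
    using assms by (simp add: borel_measurable_continuous_onI)
  have "(\<integral>x. f x \<partial>unif01) = (\<integral>x. indicator {0..1} x *\<^sub>R f x \<partial>lborel)"
    unfolding unif01_eq by (subst integral_density) (use m in auto)
  also have "\<dots> = (LINT x : {0..1} | lborel. f x)"
    by (simp add: set_lebesgue_integral_def)
  also have "\<dots> = integral {0..1} f"
    apply (rule set_borel_integral_eq_integral)
    unfolding set_integrable_def
    by (rule borel_integrable_compact) (auto intro: continuous_on_subset[OF assms])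
  finally show ?thesis .
qed

lemma distortion_eq: "finite T \<Longrightarrow> T \<noteq> {} \<Longrightarrow> distortion unif01 T = integral {0..1} (dmin T)"
  unfolding distortion_def using integral_unif01[OF dmin_cont] by (simp add: dmin_def[symmetric])

lemma dmin_integrable: "finite T \<Longrightarrow> T \<noteq> {} \<Longrightarrow> dmin T integrable_on {a..b}"
  by (rule integrable_continuous_interval) (rule continuous_on_subset[OF dmin_cont], auto)

lemma int_sq_left:
  fixes u w :: real
  assumes "u \<le> w" shows "integral {u..w} (\<lambda>x. (x - u)\<^sup>2) = (w - u)^3 / 3"
proof -
  have "((\<lambda>x. (x - u)\<^sup>2) has_integral ((\<lambda>x. (x - u)^3/3) w - (\<lambda>x. (x - u)^3/3) u)) {u..w}"
    apply (rule fundamental_theorem_of_calculus[OF assms])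
    unfolding has_real_derivative_iff_has_vector_derivative[symmetric]
    apply (auto intro!: derivative_eq_intros simp: power2_eq_square)
    done
  then show ?thesis by (simp add: integral_unique)
qed

lemma int_sq_right:
  fixes u w :: real
  assumes "u \<le> w" shows "integral {u..w} (\<lambda>x. (w - x)\<^sup>2) = (w - u)^3 / 3"
proof -
  have "((\<lambda>x. (w - x)\<^sup>2) has_integral ((\<lambda>x. (x - w)^3/3) w - (\<lambda>x. (x - w)^3/3) u)) {u..w}"
    apply (rule fundamental_theorem_of_calculus[OF assms])
    unfolding has_real_derivative_iff_has_vector_derivative[symmetric]
    apply (auto intro!: derivative_eq_intros simp: power2_eq_square field_simps)
    done
  then have "integral {u..w} (\<lambda>x. (w - x)\<^sup>2) = (w - w)^3/3 - (u - w)^3/3" by (rule integral_unique)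
  also have "\<dots> = (w - u)^3/3" by (simp add: power3_eq_cube field_simps)
  finally show ?thesis .
qed



lemma cube_ineq:
  fixes x y p q :: real
  assumes "x \<ge> 0" "y \<ge> 0" "p > 0" "q > 0"
  shows "(x + y)^3 / (p + q)^2 \<le> x^3 / p^2 + y^3 / q^2"
proof -
  define X where "X = x / p"
  define Y where "Y = y / q"
  have x: "x = p * X" and y: "y = q * Y" using assms by (auto simp: X_def Y_def)
  have X: "X \<ge> 0" and Y: "Y \<ge> 0" using assms by (auto simp: X_def Y_def)
  have id: "(p+q)^2 * (p*X^3 + q*Y^3) - (p*X + q*Y)^3 = p*q*(X-Y)^2*((2*p+q)*X + (p+2*q)*Y)"
    by (simp add: power2_eq_square power3_eq_cube algebra_simps)
  have "0 \<le> p*q*(X-Y)^2*((2*p+q)*X + (p+2*q)*Y)"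
    using assms X Y by (intro mult_nonneg_nonneg) auto
  hence "(p*X + q*Y)^3 \<le> (p+q)^2 * (p*X^3 + q*Y^3)" using id by linarith
  hence "(p*X + q*Y)^3 / (p+q)^2 \<le> p*X^3 + q*Y^3"
    using assms by (simp add: divide_simps mult.commute)
  moreover have "x^3 / p^2 = p * X^3" "y^3/q^2 = q * Y^3" using assms
    by (auto simp: x y power2_eq_square power3_eq_cube field_simps)
  ultimately show ?thesis by (simp add: x y)
qed

lemma low_base2:
  fixes u v a0 :: real
  assumes T: "finite T" "v \<in> T" and a0: "a0 \<in> T" "a0 \<le> u" and uv: "u \<le> v"
    and gap: "\<And>a. a \<in> T \<Longrightarrow> a \<le> u \<or> a \<ge> v"
  shows "(v - u)^3 / 12 \<le> integral {u..v} (dmin T)"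
proof -
  define w where "w = (u + v) / 2"
  have uw: "u \<le> w" "w \<le> v" using uv by (auto simp: w_def)
  have ne: "T \<noteq> {}" using T by auto
  have 1: "integral {u..w} (\<lambda>x. (x - u)\<^sup>2) \<le> integral {u..w} (dmin T)"
  proof (rule integral_le)
    show "(\<lambda>x. (x - u)\<^sup>2) integrable_on {u..w}"
      by (rule integrable_continuous_interval) (auto intro!: continuous_intros)
    show "dmin T integrable_on {u..w}" using dmin_integrable[OF T(1) ne] .
    fix x assume x: "x \<in> {u..w}"
    show "(x - u)\<^sup>2 \<le> dmin T x"
    proof (rule dmin_ge[OF T(1) ne])
      fix a assume "a \<in> T"
      then consider "a \<le> u" | "a \<ge> v" using gap by blast
      then show "(x - u)\<^sup>2 \<le> (x - a)\<^sup>2"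
      proof cases
        case 1 then show ?thesis using x by (intro power_mono) auto
      next
        case 2
        have "(x - u)\<^sup>2 \<le> (a - x)\<^sup>2" using x 2 uv by (intro power_mono) (auto simp: w_def)
        then show ?thesis by (simp add: power2_commute)
      qed
    qed
  qed
  have 2: "integral {w..v} (\<lambda>x. (v - x)\<^sup>2) \<le> integral {w..v} (dmin T)"
  proof (rule integral_le)
    show "(\<lambda>x. (v - x)\<^sup>2) integrable_on {w..v}"
      by (rule integrable_continuous_interval) (auto intro!: continuous_intros)
    show "dmin T integrable_on {w..v}" using dmin_integrable[OF T(1) ne] .
    fix x assume x: "x \<in> {w..v}"
    show "(v - x)\<^sup>2 \<le> dmin T x"
    proof (rule dmin_ge[OF T(1) ne])
      fix a assume "a \<in> T"
      then consider "a \<le> u" | "a \<ge> v" using gap by blast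
      then show "(v - x)\<^sup>2 \<le> (x - a)\<^sup>2"
      proof cases
        case 1 then show ?thesis using x uv by (intro power_mono) (auto simp: w_def)
      next
        case 2
        have "(v - x)\<^sup>2 \<le> (a - x)\<^sup>2" using x 2 uv by (intro power_mono) (auto simp: w_def)
        then show ?thesis by (simp add: power2_commute)
      qed
    qed
  qed
  have "integral {u..v} (dmin T) = integral {u..w} (dmin T) + integral {w..v} (dmin T)"
    using Henstock_Kurzweil_Integration.integral_combine[OF uw dmin_integrable[OF T(1) ne]] by simp
  moreover have "integral {u..w} (\<lambda>x. (x - u)\<^sup>2) = (w - u)^3/3" by (rule int_sq_left[OF uw(1)])
  moreover have "integral {w..v} (\<lambda>x. (v - x)\<^sup>2) = (v - w)^3/3" by (rule int_sq_right[OF uw(2)])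
  moreover have "(w - u)^3/3 + (v - w)^3/3 = (v - u)^3/12"
    by (simp add: w_def power3_eq_cube field_simps)
  ultimately show ?thesis using 1 2 by linarith
qed

lemma low_base1:
  fixes u v :: real
  assumes T: "finite T" "v \<in> T" and uv: "u \<le> v"
    and gap: "\<And>a. a \<in> T \<Longrightarrow> a \<ge> v"
  shows "(v - u)^3 / 3 \<le> integral {u..v} (dmin T)"
proof -
  have ne: "T \<noteq> {}" using T by auto
  have "integral {u..v} (\<lambda>x. (v - x)\<^sup>2) \<le> integral {u..v} (dmin T)"
  proof (rule integral_le)
    show "(\<lambda>x. (v - x)\<^sup>2) integrable_on {u..v}"
      by (rule integrable_continuous_interval) (auto intro!: continuous_intros)
    show "dmin T integrable_on {u..v}" using dmin_integrable[OF T(1) ne] .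
    fix x assume x: "x \<in> {u..v}"
    show "(v - x)\<^sup>2 \<le> dmin T x"
    proof (rule dmin_ge[OF T(1) ne])
      fix a assume "a \<in> T"
      hence "(v - x)\<^sup>2 \<le> (a - x)\<^sup>2" using x gap by (intro power_mono) auto
      then show "(v - x)\<^sup>2 \<le> (x - a)\<^sup>2" by (simp add: power2_commute)
    qed
  qed
  then show ?thesis using int_sq_right[OF uv] by simp
qed

lemma low_aux:
  fixes u :: real
  assumes T: "finite T"
  shows "v \<in> T \<Longrightarrow> u \<le> v \<Longrightarrow> card (T \<inter> {u<..<v}) = N \<Longrightarrow>
    (v - u)^3 / (3 * (2 * real N + (if \<exists>a\<in>T. a \<le> u then 2 else 1))^2) \<le> integral {u..v} (dmin T)"
proof (induction N arbitrary: v)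
  case 0
  have fin: "finite (T \<inter> {u<..<v})" using T by simp
  have gap: "a \<le> u \<or> a \<ge> v" if "a \<in> T" for a
    using 0 fin that by (auto simp: card_eq_0_iff)
  show ?case
  proof (cases "\<exists>a\<in>T. a \<le> u")
    case True
    then obtain a0 where "a0 \<in> T" "a0 \<le> u" by blast
    from low_base2[OF T 0(1) this 0(2) gap] True show ?thesis by simp
  next
    case False
    have "a \<ge> v" if "a \<in> T" for a using gap[OF that] False that by force
    from low_base1[OF T 0(1) 0(2) this] False show ?thesis by simp
  qed
next
  case (Suc N)
  define S where "S = T \<inter> {u<..<v}"
  have finS: "finite S" using T by (simp add: S_def)
  have neS: "S \<noteq> {}" using Suc(4) by (auto simp: S_def)
  define t where "t = Max S"
  have tS: "t \<in> S" using finS neS by (simp add: t_def)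
  hence tT: "t \<in> T" and ut: "u < t" and tv: "t < v" by (auto simp: S_def)
  have tmax: "a \<le> t" if "a \<in> S" for a using finS that by (simp add: t_def)
  have S': "T \<inter> {u<..<t} = S - {t}" using tmax tv by (force simp: S_def)
  have cardS': "card (T \<inter> {u<..<t}) = N" using S' Suc(4) tS finS by (simp add: S_def)
  define e :: real where "e = (if \<exists>a\<in>T. a \<le> u then 2 else 1)"
  have e: "e \<ge> 1" by (simp add: e_def)
  have IH: "(t - u)^3 / (3 * (2 * real N + e)^2) \<le> integral {u..t} (dmin T)"
    using Suc.IH[OF tT _ cardS'] ut by (simp add: e_def)
  have gap: "a \<le> t \<or> a \<ge> v" if "a \<in> T" for a
    using tmax[of a] that ut by (force simp: S_def)
  have B: "(v - t)^3 / 12 \<le> integral {t..v} (dmin T)"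
    by (rule low_base2[OF T Suc(2) tT order_refl]) (use tv gap in auto)
  have ne: "T \<noteq> {}" using T tT by auto
  have comb: "integral {u..v} (dmin T) = integral {u..t} (dmin T) + integral {t..v} (dmin T)"
    using Henstock_Kurzweil_Integration.integral_combine[of u t v, OF _ _ dmin_integrable[OF T ne]] ut tv by simp
  have ci: "((t - u) + (v - t))^3 / ((2 * real N + e) + 2)^2 \<le> (t - u)^3 / (2 * real N + e)^2 + (v - t)^3 / 2^2"
    by (rule cube_ineq) (use ut tv e in auto)
  have "(v - u)^3 / (3 * (2 * real (Suc N) + e)^2) = ((t - u) + (v - t))^3 / ((2 * real N + e) + 2)^2 / 3"
    by (simp add: algebra_simps)
  also have "\<dots> \<le> ((t - u)^3 / (2 * real N + e)^2 + (v - t)^3 / 2^2) / 3"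
    using ci by (simp add: divide_right_mono)
  also have "\<dots> = (t - u)^3 / (3 * (2 * real N + e)^2) + (v - t)^3 / 12"
    by (simp add: field_simps)
  also have "\<dots> \<le> integral {u..v} (dmin T)" using IH B comb by linarith
  finally show ?case by (simp add: e_def)
qed

lemma low:
  fixes u v :: real
  assumes "finite T" "v \<in> T" "u \<le> v"
  shows "(v - u)^3 / (3 * (2 * real (card (T \<inter> {u<..<v})) + (if \<exists>a\<in>T. a \<le> u then 2 else 1))^2) \<le> integral {u..v} (dmin T)"
  using low_aux[OF assms refl] .

lemma up_half:
  fixes p q :: real
  assumes T: "finite T" and pq: "p \<le> q" and pt: "p \<in> T \<or> q \<in> T"
  shows "integral {p..q} (dmin T) \<le> (q - p)^3 / 3"
proof -
  have ne: "T \<noteq> {}" using pt by auto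
  from pt show ?thesis
  proof
    assume p: "p \<in> T"
    have "integral {p..q} (dmin T) \<le> integral {p..q} (\<lambda>x. (x - p)\<^sup>2)"
      by (rule integral_le[OF dmin_integrable[OF T ne]])
         (auto intro!: integrable_continuous_interval continuous_intros dmin_le[OF T p])
    then show ?thesis using int_sq_left[OF pq] by simp
  next
    assume q: "q \<in> T"
    have "integral {p..q} (dmin T) \<le> integral {p..q} (\<lambda>x. (q - x)\<^sup>2)"
      by (rule integral_le[OF dmin_integrable[OF T ne]])
         (auto intro!: integrable_continuous_interval continuous_intros simp: dmin_le[OF T q] power2_commute)
    then show ?thesis using int_sq_right[OF pq] by simp
  qed
qed

lemma up_seg:
  fixes u eta :: real
  assumes T: "finite T" "T \<noteq> {}" and eta: "eta \<ge> 0"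
  shows "(\<forall>i<N. u + real i * eta \<in> T \<or> u + real (Suc i) * eta \<in> T) \<Longrightarrow>
    integral {u..u + real N * eta} (dmin T) \<le> real N * eta^3 / 3"
proof (induction N)
  case 0 then show ?case by simp
next
  case (Suc N)
  have IH: "integral {u..u + real N * eta} (dmin T) \<le> real N * eta^3 / 3" using Suc by auto
  have H: "integral {u + real N * eta..u + real (Suc N) * eta} (dmin T) \<le> eta^3/3"
    using up_half[OF T(1), of "u + real N * eta" "u + real (Suc N) * eta"] Suc.prems eta
    by (simp add: algebra_simps)
  have "integral {u..u + real (Suc N) * eta} (dmin T) =
      integral {u..u + real N * eta} (dmin T) + integral {u + real N * eta..u + real (Suc N) * eta} (dmin T)"
    using Henstock_Kurzweil_Integration.integral_combine[of u "u + real N * eta" "u + real (Suc N) * eta",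
        OF _ _ dmin_integrable[OF T]] eta
    by (simp add: algebra_simps)
  then show ?case using IH H by (simp add: algebra_simps)
qed

lemma int_split:
  assumes T: "finite T" "T \<noteq> {}" and k: "k > (0::nat)"
  shows "integral {0..real N / real k} (dmin T) = (\<Sum>j<N. integral {real j / real k..real (Suc j) / real k} (dmin T))"
proof (induction N)
  case 0 then show ?case by simp
next
  case (Suc N)
  have "integral {0..real (Suc N) / real k} (dmin T) =
     integral {0..real N / real k} (dmin T) + integral {real N / real k..real (Suc N) / real k} (dmin T)"
    using Henstock_Kurzweil_Integration.integral_combine[of 0 "real N / real k" "real (Suc N) / real k",
        OF _ _ dmin_integrable[OF T]] k
    by (simp add: divide_right_mono)
  then show ?case using Suc by simp
qed



lemma chord_id:
  fixes a b s :: real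
  assumes "0 < a" "a < b" "0 < s"
  shows "1/s^2 - (1/a^2 + (1/b^2 - 1/a^2)*(s-a)/(b-a)) = (s-a)*(s-b)*(s * (a+b)+a*b)/(a^2*b^2* s^2)"
  using assms by (simp add: field_simps power2_eq_square)

lemma chord_ge:
  fixes a b s :: real
  assumes "0 < a" "a < b" "0 < s" "(s-a)*(s-b) \<ge> 0"
  shows "1/a^2 + (1/b^2 - 1/a^2)*(s-a)/(b-a) \<le> 1/s^2"
proof -
  have "0 \<le> (s-a)*(s-b)*(s * (a+b)+a*b)/(a^2*b^2* s^2)"
  proof -
    have p: "0 < s*(a+b)+a*b" using assms by (simp add: add_pos_pos)
    have "0 \<le> (s-a)*(s-b)*(s * (a+b)+a*b)" using mult_nonneg_nonneg[OF assms(4)] p by simp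
    then show ?thesis using assms by (intro divide_nonneg_pos) auto
  qed
  then show ?thesis using chord_id[OF assms(1-3)] by linarith
qed

lemma chord_gt:
  fixes a b s :: real
  assumes "0 < a" "a < b" "0 < s" "(s-a)*(s-b) > 0"
  shows "1/a^2 + (1/b^2 - 1/a^2)*(s-a)/(b-a) < 1/s^2"
proof -
  have "0 < (s-a)*(s-b)*(s * (a+b)+a*b)/(a^2*b^2* s^2)"
  proof -
    have p: "0 < s*(a+b)+a*b" using assms by (simp add: add_pos_pos)
    have "0 < (s-a)*(s-b)*(s * (a+b)+a*b)" using mult_pos_pos[OF assms(4)] p by simp
    then show ?thesis using assms by (intro divide_pos_pos) auto
  qed
  then show ?thesis using chord_id[OF assms(1-3)] by linarith
qed

lemma inv_sq_less:
  fixes a b :: real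
  assumes "0 < a" "a < b" shows "1/b^2 < 1/a^2"
proof -
  have "a^2 < b^2" using assms by (intro power_strict_mono) auto
  then show ?thesis using assms by (intro divide_strict_left_mono) auto
qed

lemma comb0:
  fixes s :: "nat \<Rightarrow> nat" and s0 m K :: nat and J :: "nat set"
  assumes J: "finite J" "card J = K" and m: "m \<ge> 1" and s0: "s0 \<ge> 1"
    and sj: "\<forall>j\<in>J. even (s j) \<and> s j \<ge> 2"
    and sum: "s0 + (\<Sum>j\<in>J. s j) \<le> 2*m*(K+1) - 1"
    and val: "1/(real s0)^2 + (\<Sum>j\<in>J. 1/(real (s j))^2) \<le> 1/(2*real m - 1)^2 + real K/(2*real m)^2"
  shows "s0 = 2*m - 1 \<and> (\<forall>j\<in>J. s j = 2*m)"
proof -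
  define a :: real where "a = 2*real m - 1"
  define b :: real where "b = 2*real m"
  define l where "l = 1/b^2 - 1/a^2"
  define A where "A x = 1/x^2 - l*x" for x :: real
  have a0: "0 < a" "a < b" "b - a = 1" using m by (auto simp: a_def b_def)
  have lneg: "l < 0" using inv_sq_less[OF a0(1,2)] by (simp add: l_def)
  have "A b - A a = (1/b^2 - 1/a^2) - l*(b-a)" by (simp add: A_def algebra_simps)
  hence Aab: "A a = A b" using a0(3) by (simp add: l_def)
  have Aeq: "1/x^2 = A x + l * x" for x by (simp add: A_def)
  have chord: "1/a^2 + l*(x-a) \<le> 1/x^2" if "0 < x" "(x-a)*(x-b) \<ge> 0" for x
    using chord_ge[OF a0(1,2) that] a0(3) by (simp add: l_def)
  have chords: "1/a^2 + l*(x-a) < 1/x^2" if "0 < x" "(x-a)*(x-b) > 0" for x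
    using chord_gt[OF a0(1,2) that] a0(3) by (simp add: l_def)
  have Ai: "A a \<le> A (real s0)"
  proof -
    have "(real s0 - a) * (real s0 - b) \<ge> 0"
    proof (cases "s0 \<le> 2*m - 1")
      case True
      hence "real s0 - a \<le> 0" "real s0 - b \<le> 0" using m by (auto simp: a_def b_def)
      then show ?thesis by (simp add: mult_nonpos_nonpos)
    next
      case False
      hence "real s0 - a \<ge> 0" "real s0 - b \<ge> 0" using m by (auto simp: a_def b_def)
      then show ?thesis by simp
    qed
    from chord[OF _ this] s0 show ?thesis by (simp add: A_def algebra_simps)
  qed
  have Aj: "A b \<le> A (real (s j))" and Ajs: "s j \<noteq> 2*m \<Longrightarrow> A b < A (real (s j))" if j: "j \<in> J" for j
  proof -
    obtain q where q: "s j = 2*q" using sj j by blast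
    have q1: "q \<ge> 1" using sj j q by auto
    have "q \<le> m - 1 \<or> q = m \<or> q \<ge> m + 1" by arith
    then consider "q \<le> m - 1" | "q = m" | "q \<ge> m + 1" by blast
    then have r: "(real (s j) - a) * (real (s j) - b) \<ge> 0 \<and> (s j \<noteq> 2*m \<longrightarrow> (real (s j) - a) * (real (s j) - b) > 0)"
    proof cases
      case 1
      hence "real q \<le> real m - 1" using m by linarith
      hence "real (s j) - a < 0" "real (s j) - b < 0" by (auto simp: a_def b_def q)
      hence "0 < (real (s j) - a) * (real (s j) - b)" by (rule mult_neg_neg)
      then show ?thesis by simp
    next
      case 2 then show ?thesis by (simp add: q b_def)
    next
      case 3
      hence "real (s j) - a > 0" "real (s j) - b > 0" by (auto simp: a_def b_def q)
      then show ?thesis by simp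
    qed
    have pos: "0 < real (s j)" using sj j by auto
    show "A b \<le> A (real (s j))" using chord[OF pos] r Aab by (simp add: A_def algebra_simps)
    show "A b < A (real (s j))" if "s j \<noteq> 2*m" using chords[OF pos] r that Aab by (simp add: A_def algebra_simps)
  qed
  define S where "S = real s0 + (\<Sum>j\<in>J. real (s j))"
  have Sle: "S \<le> a + real K * b"
  proof -
    have "real (s0 + (\<Sum>j\<in>J. s j)) \<le> real (2*m*(K+1) - 1)" using sum by linarith
    moreover have "real (2*m*(K+1) - 1) = a + real K * b" using m
      by (simp add: of_nat_diff a_def b_def algebra_simps)
    ultimately show ?thesis by (simp add: S_def)
  qed
  have lhs: "1/(real s0)^2 + (\<Sum>j\<in>J. 1/(real (s j))^2) = A (real s0) + (\<Sum>j\<in>J. A (real (s j))) + l * S"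
    by (simp add: Aeq[of "real s0"] Aeq[of "real (s _)"] sum.distrib sum_distrib_left S_def algebra_simps)
  have rhs: "1/(2*real m - 1)^2 + real K/(2*real m)^2 = A a + real K * A b + l * (a + real K * b)"
  proof -
    have "1/(2*real m - 1)^2 + real K/(2*real m)^2 = 1/a^2 + real K * (1/b^2)" by (simp add: a_def b_def)
    also have "\<dots> = (A a + l*a) + real K * (A b + l*b)" by (simp only: Aeq[of a] Aeq[of b])
    also have "\<dots> = A a + real K * A b + l * (a + real K * b)" by (simp add: algebra_simps)
    finally show ?thesis .
  qed
  have sumA: "real K * A b \<le> (\<Sum>j\<in>J. A (real (s j)))"
    using sum_mono[of J "\<lambda>_. A b" "\<lambda>j. A (real (s j))"] Aj J by simp
  have lS: "l * (a + real K * b) \<le> l * S" using Sle lneg by (simp add: mult_left_mono_neg)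
  have all: "\<forall>j\<in>J. s j = 2*m"
  proof (rule ccontr)
    assume "\<not> ?thesis"
    then obtain j where "j \<in> J" "s j \<noteq> 2*m" by blast
    hence "(\<Sum>j\<in>J. A b) < (\<Sum>j\<in>J. A (real (s j)))"
      using J Aj Ajs by (intro sum_strict_mono_ex1) auto
    then show False using val lhs rhs Ai lS J by simp
  qed
  have "l * S \<le> l * (a + real K * b)" using val lhs rhs Ai sumA by linarith
  hence Sge: "a + real K * b \<le> S" using lneg by (simp add: mult_le_cancel_left_neg)
  have "(\<Sum>j\<in>J. real (s j)) = real K * b" using all J by (simp add: b_def)
  hence "real s0 = a" using Sge Sle by (simp add: S_def)
  hence "s0 = 2*m - 1" using m by (simp add: a_def of_nat_diff)
  with all show ?thesis by simp
qed

lemma midconv: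
  fixes c :: real assumes "c > 1"
  shows "2*(1/c^2) < 1/(c-1)^2 + 1/(c+1)^2"
proof -
  have p: "0 < c - 1" "0 < c + 1" "0 < c" using assms by auto
  have "2*((c-1)^2*(c+1)^2) < c^2*((c+1)^2 + (c-1)^2)"
  proof -
    have e: "c^2*((c+1)^2 + (c-1)^2) - 2*((c-1)^2*(c+1)^2) = 6*c^2 - 2"
      by (simp add: power2_eq_square algebra_simps)
    have "1 < c^2" using assms by (simp add: one_less_power)
    then show ?thesis using e by linarith
  qed
  then show ?thesis using p by (simp add: field_simps)
qed

lemma aux1: fixes P Q Rr L :: real shows "2*Rr < P+Q \<Longrightarrow> L = (Q-P)/2 \<Longrightarrow> L < Q - Rr" by simp
lemma aux2: fixes P Q Rr L :: real shows "2*Rr < P+Q \<Longrightarrow> L = (Q-P)/2 \<Longrightarrow> Rr - P < L" by simp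

lemma aux3: fixes P R x c :: real shows "P + (R - P)*(x - (c-1)) = R + (R-P)*(x-c)" by (simp add: algebra_simps)

lemma comb1:
  fixes s :: "nat \<Rightarrow> nat" and s0 m K l :: nat and J :: "nat set"
  assumes J: "finite J" "card J = K" and m: "m \<ge> 1" and l: "l \<ge> 1" "l \<le> K + 1" and s0: "s0 \<ge> 1"
    and sj: "\<forall>j\<in>J. even (s j) \<and> s j \<ge> 2"
    and sum: "s0 + (\<Sum>j\<in>J. s j) \<le> 2*m*(K+1) + 2*l - 1"
    and val: "1/(real s0)^2 + (\<Sum>j\<in>J. 1/(real (s j))^2) \<le>
       1/(2*real m + 1)^2 + real (l - 1)/(2*real m + 2)^2 + real (K + 1 - l)/(2*real m)^2"
  shows "s0 = 2*m + 1 \<and> (\<forall>j\<in>J. s j = 2*m \<or> s j = 2*m + 2) \<and> card {j\<in>J. s j = 2*m + 2} = l - 1"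
proof -
  define a :: real where "a = 2*real m"
  define b :: real where "b = 2*real m + 2"
  define c :: real where "c = 2*real m + 1"
  define lam where "lam = (1/b^2 - 1/a^2)/2"
  define A where "A x = 1/x^2 - lam*x" for x :: real
  have a0: "0 < a" "a < b" "b - a = 2" "c = a + 1" "b = c + 1" using m by (auto simp: a_def b_def c_def)
  have Aab: "A a = A b"
  proof -
    have "A b - A a = (1/b^2 - 1/a^2) - lam*(b-a)" by (simp add: A_def algebra_simps)
    also have "\<dots> = 0" using a0(3) by (simp add: lam_def)
    finally show ?thesis by simp
  qed
  have Aeq: "1/x^2 = A x + lam * x" for x by (simp add: A_def)
  have chord: "1/a^2 + lam*(x-a) \<le> 1/x^2" if "0 < x" "(x-a)*(x-b) \<ge> 0" for x
    using chord_ge[OF a0(1,2) that] a0(3) by (simp add: lam_def)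
  have chords: "1/a^2 + lam*(x-a) < 1/x^2" if "0 < x" "(x-a)*(x-b) > 0" for x
    using chord_gt[OF a0(1,2) that] a0(3) by (simp add: lam_def)
  have mc: "2*(1/c^2) < 1/(c-1)^2 + 1/(c+1)^2" by (rule midconv) (use m in \<open>simp add: c_def\<close>)
  define mu where "mu = 1/(c+1)^2 - 1/c^2"
  define nu where "nu = 1/c^2 - 1/(c-1)^2"
  have ac: "a = c - 1" "b = c + 1" using a0 by auto
  have lamPQ: "lam = (1/(c+1)^2 - 1/(c-1)^2)/2" by (simp add: lam_def ac)
  have mul: "lam < mu" using aux1[OF mc lamPQ] unfolding mu_def .
  have nul: "nu < lam" using aux2[OF mc lamPQ] unfolding nu_def .
  have Ai: "A c \<le> A (real s0)" and Ais: "s0 \<noteq> 2*m+1 \<Longrightarrow> A c < A (real s0)"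
  proof -
    have c0: "0 < c" "c < c + 1" "0 < c - 1" "c - 1 < c" using m by (auto simp: c_def)
    consider "s0 = 2*m+1" | "s0 \<ge> 2*m+2" | "s0 \<le> 2*m" by linarith
    then have "s0 \<noteq> 2*m+1 \<longrightarrow> A c < A (real s0)"
    proof cases
      case 1 then show ?thesis by simp
    next
      case 2
      have x: "real s0 \<ge> c + 1" using 2 by (simp add: c_def)
      have "(real s0 - c) * (real s0 - (c+1)) \<ge> 0" using x c0 by simp
      from chord_ge[OF c0(1,2) _ this] s0
      have "1/c^2 + mu*(real s0 - c) \<le> 1/(real s0)^2" by (simp add: mu_def)
      moreover have "0 < (mu - lam) * (real s0 - c)" using mul x by simp
      ultimately show ?thesis by (simp add: A_def algebra_simps)
    next
      case 3
      have x: "real s0 \<le> c - 1" using 3 by (simp add: c_def)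
      have "(real s0 - (c-1)) * (real s0 - c) \<ge> 0" using x c0
        by (intro mult_nonpos_nonpos) auto
      from chord_ge[OF c0(3,4) _ this] s0
      have "1/(c-1)^2 + nu*(real s0 - (c-1)) \<le> 1/(real s0)^2" by (simp add: nu_def)
      moreover have "1/(c-1)^2 + nu*(real s0 - (c-1)) = 1/c^2 + nu*(real s0 - c)"
        unfolding nu_def by (rule aux3)
      moreover have "0 < (lam - nu) * (c - real s0)" using nul x by simp
      ultimately show ?thesis by (simp add: A_def algebra_simps)
    qed
    then show "s0 \<noteq> 2*m+1 \<Longrightarrow> A c < A (real s0)" by blast
    then show "A c \<le> A (real s0)" by (cases "s0 = 2*m+1") (auto simp: c_def add.commute)
  qed
  have Aj: "A a \<le> A (real (s j))" and Ajs: "s j \<noteq> 2*m \<Longrightarrow> s j \<noteq> 2*m+2 \<Longrightarrow> A a < A (real (s j))" if j: "j \<in> J" for j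
  proof -
    obtain q where q: "s j = 2*q" using sj j by blast
    have q1: "q \<ge> 1" using sj j q by auto
    consider "q \<le> m - 1" | "q = m" | "q = m + 1" | "q \<ge> m + 2" by linarith
    then have r: "(real (s j) - a) * (real (s j) - b) \<ge> 0 \<and> (s j \<noteq> 2*m \<longrightarrow> s j \<noteq> 2*m+2 \<longrightarrow> (real (s j) - a) * (real (s j) - b) > 0)"
    proof cases
      case 1
      hence "real q \<le> real m - 1" using m by linarith
      hence "real (s j) - a < 0" "real (s j) - b < 0" by (auto simp: a_def b_def q)
      hence "0 < (real (s j) - a) * (real (s j) - b)" by (rule mult_neg_neg)
      then show ?thesis by simp
    next
      case 2 then show ?thesis by (simp add: q a_def)
    next
      case 3 then show ?thesis by (simp add: q b_def)
    next
      case 4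
      hence "real (s j) - a > 0" "real (s j) - b > 0" by (auto simp: a_def b_def q)
      then show ?thesis by simp
    qed
    have pos: "0 < real (s j)" using sj j by auto
    show "A a \<le> A (real (s j))" using chord[OF pos] r by (simp add: A_def algebra_simps)
    show "A a < A (real (s j))" if "s j \<noteq> 2*m" "s j \<noteq> 2*m+2" using chords[OF pos] r that by (simp add: A_def algebra_simps)
  qed
  define S where "S = real s0 + (\<Sum>j\<in>J. real (s j))"
  define Z where "Z = c + real (l-1) * b + real (K+1-l) * a"
  have Zeq: "Z = real (2*m*(K+1) + 2*l - 1)" using m l
    by (simp add: Z_def a_def b_def c_def of_nat_diff algebra_simps)
  have Sle: "S \<le> Z"
  proof -
    have "real (s0 + (\<Sum>j\<in>J. s j)) \<le> real (2*m*(K+1) + 2*l - 1)" using sum by linarith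
    then show ?thesis by (simp add: S_def Zeq)
  qed
  have lhs: "1/(real s0)^2 + (\<Sum>j\<in>J. 1/(real (s j))^2) = A (real s0) + (\<Sum>j\<in>J. A (real (s j))) + lam * S"
    by (simp add: Aeq[of "real s0"] Aeq[of "real (s _)"] sum.distrib sum_distrib_left S_def algebra_simps)
  have rhs: "1/(2*real m + 1)^2 + real (l - 1)/(2*real m + 2)^2 + real (K + 1 - l)/(2*real m)^2
      = A c + real K * A a + lam * Z"
  proof -
    have "1/(2*real m + 1)^2 + real (l - 1)/(2*real m + 2)^2 + real (K + 1 - l)/(2*real m)^2
        = 1/c^2 + real (l-1) * (1/b^2) + real (K+1-l) * (1/a^2)" by (simp add: a_def b_def c_def)
    also have "\<dots> = (A c + lam*c) + real (l-1) * (A b + lam*b) + real (K+1-l) * (A a + lam*a)"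
      by (simp only: Aeq[of a] Aeq[of b] Aeq[of c])
    also have "\<dots> = A c + (real (l-1) + real (K+1-l)) * A a + lam * Z"
      by (simp add: Aab Z_def algebra_simps)
    also have "real (l-1) + real (K+1-l) = real K" using l by (simp add: of_nat_diff)
    finally show ?thesis .
  qed
  have lneg: "lam < 0" using inv_sq_less[OF a0(1,2)] by (simp add: lam_def)
  have sumA: "real K * A a \<le> (\<Sum>j\<in>J. A (real (s j)))"
    using sum_mono[of J "\<lambda>_. A a" "\<lambda>j. A (real (s j))"] Aj J by simp
  have lS: "lam * Z \<le> lam * S" using Sle lneg by (simp add: mult_left_mono_neg)
  have s0c: "s0 = 2*m+1"
  proof (rule ccontr)
    assume "s0 \<noteq> 2*m+1"
    from Ais[OF this] show False using val lhs rhs sumA lS by linarith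
  qed
  have all: "\<forall>j\<in>J. s j = 2*m \<or> s j = 2*m+2"
  proof (rule ccontr)
    assume "\<not> ?thesis"
    then obtain j where "j \<in> J" "s j \<noteq> 2*m" "s j \<noteq> 2*m+2" by blast
    hence "(\<Sum>j\<in>J. A a) < (\<Sum>j\<in>J. A (real (s j)))"
      using J Aj Ajs by (intro sum_strict_mono_ex1) auto
    then show False using val lhs rhs Ai lS J by simp
  qed
  have "lam * S \<le> lam * Z" using val lhs rhs Ai sumA by linarith
  hence Sge: "Z \<le> S" using lneg by (simp add: mult_le_cancel_left_neg)
  hence "real (s0 + (\<Sum>j\<in>J. s j)) = real (2*m*(K+1) + 2*l - 1)" using Sle by (simp add: S_def Zeq)
  hence tot: "(\<Sum>j\<in>J. s j) = 2*m*K + 2*(l-1)" using s0c l m by (simp only: of_nat_eq_iff) (simp add: algebra_simps)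
  have "(\<Sum>j\<in>J. s j) = (\<Sum>j\<in>J. 2*m + (if s j = 2*m+2 then 2 else 0))"
    using all by (intro sum.cong) auto
  also have "\<dots> = 2*m*K + 2 * card {j\<in>J. s j = 2*m+2}"
    using J by (simp add: sum.distrib sum.If_cases Int_def)
  finally have "card {j\<in>J. s j = 2*m + 2} = l - 1" using tot by simp
  with s0c all show ?thesis by simp
qed



lemma beta_eq: "{real j / real k | j. 1 \<le> j \<and> j \<le> k} = (\<lambda>j. real j / real k) ` {1..k}"
  by auto

lemma beta_card: "k \<ge> 1 \<Longrightarrow> card ((\<lambda>j. real j / real k) ` {1..k}) = k"
  by (subst card_image) (auto simp: inj_on_def)

lemma upper:
  fixes k n c0 :: nat and t :: "nat \<Rightarrow> nat"
  assumes k: "k \<ge> 1" "k \<le> n" and t: "\<forall>j\<in>{1..<k}. t j \<ge> 1"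
    and cnt: "c0 + (\<Sum>j\<in>{1..<k}. t j - 1) \<le> n - k"
  shows "cond_quant_error unif01 {real j / real k | j. 1 \<le> j \<and> j \<le> k} n \<le>
     (\<Sum>j<k. (1/real k)^3 / (3 * (real (if j = 0 then 2*c0+1 else 2 * t j))^2))"
proof -
  define \<beta> where "\<beta> = {real j / real k | j. 1 \<le> j \<and> j \<le> k}"
  define sf where "sf j = (if j = 0 then 2*c0+1 else 2 * t j)" for j
  have \<beta>eq: "\<beta> = (\<lambda>j. real j / real k) ` {1..k}" unfolding \<beta>_def by (rule beta_eq)
  have card\<beta>: "card \<beta> = k" using beta_card[OF k(1)] \<beta>eq by simp
  have fin\<beta>: "finite \<beta>" by (simp add: \<beta>eq)
  have in\<beta>: "real i / real k \<in> \<beta>" if "1 \<le> i" "i \<le> k" for i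
    unfolding \<beta>eq using that by (intro image_eqI[where x=i]) auto
  have sfpos: "sf j \<ge> 1" if "j < k" for j using t that by (auto simp: sf_def)
  define P where "P j i = real j / real k + real i / (real k * real (sf j))" for j i :: nat
  have Pend: "P j (sf j) = real (Suc j) / real k" if "j < k" for j
    using sfpos[OF that] k by (simp add: P_def field_simps)
  have P0: "P j 0 = real j / real k" for j by (simp add: P_def)
  define \<alpha>0 where "\<alpha>0 = (\<lambda>p. P 0 (2*p+1)) ` {..<c0}"
  define \<alpha>1 where "\<alpha>1 = (\<Union>j\<in>{1..<k}. (\<lambda>p. P j (2*p+2)) ` {..<t j - 1})"
  define \<alpha> where "\<alpha> = \<alpha>0 \<union> \<alpha>1"
  have fin\<alpha>: "finite \<alpha>" by (simp add: \<alpha>_def \<alpha>0_def \<alpha>1_def)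
  have "card \<alpha> \<le> card \<alpha>0 + card \<alpha>1" unfolding \<alpha>_def by (rule card_Un_le)
  also have "card \<alpha>0 \<le> c0" unfolding \<alpha>0_def using card_image_le[of "{..<c0}"] by simp
  also have "card \<alpha>1 \<le> (\<Sum>j\<in>{1..<k}. card ((\<lambda>p. P j (2*p+2)) ` {..<t j - 1}))"
    unfolding \<alpha>1_def by (rule card_UN_le) simp
  also have "\<dots> \<le> (\<Sum>j\<in>{1..<k}. t j - 1)"
  proof (rule sum_mono)
    fix j show "card ((\<lambda>p. P j (2*p+2)) ` {..<t j - 1}) \<le> t j - 1"
      using card_image_le[of "{..<t j - 1}" "\<lambda>p. P j (2*p+2)"] by simp
  qed
  finally have card\<alpha>: "card \<alpha> \<le> n - card \<beta>" using cnt card\<beta> by linarith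
  define T where "T = \<alpha> \<union> \<beta>"
  have finT: "finite T" and neT: "T \<noteq> {}" using fin\<alpha> fin\<beta> k by (auto simp: T_def \<beta>eq)
  have dist_nonneg: "0 \<le> distortion unif01 (a \<union> \<beta>)" if "finite a" for a
  proof -
    have "finite (a \<union> \<beta>)" "a \<union> \<beta> \<noteq> {}" using that fin\<beta> k by (auto simp: \<beta>eq)
    then show ?thesis
      by (simp add: distortion_eq integral_nonneg dmin_integrable dmin_nonneg)
  qed
  have "cond_quant_error unif01 \<beta> n \<le> distortion unif01 T"
    unfolding cond_quant_error_def T_def
    by (rule cInf_lower) (use fin\<alpha> card\<alpha> dist_nonneg in \<open>auto intro!: bdd_belowI[where m=0]\<close>)
  also have "distortion unif01 T = integral {0..real k / real k} (dmin T)"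
    using k by (simp add: distortion_eq[OF finT neT])
  also have "\<dots> = (\<Sum>j<k. integral {real j / real k..real (Suc j) / real k} (dmin T))"
    using int_split[OF finT neT, of k k] k by simp
  also have "\<dots> \<le> (\<Sum>j<k. (1/real k)^3 / (3 * (real (sf j))^2))"
  proof (rule sum_mono)
    fix j assume "j \<in> {..<k}"
    hence j: "j < k" by simp
    define eta where "eta = 1 / (real k * real (sf j))"
    have eta0: "eta \<ge> 0" by (simp add: eta_def)
    have Peq: "real j / real k + real i * eta = P j i" for i by (simp add: eta_def P_def)
    have half: "\<forall>i<sf j. real j / real k + real i * eta \<in> T \<or> real j / real k + real (Suc i) * eta \<in> T"
    proof (intro allI impI)
      fix i assume i: "i < sf j"
      show "real j / real k + real i * eta \<in> T \<or> real j / real k + real (Suc i) * eta \<in> T"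
        unfolding Peq
      proof (cases "j = 0")
        case True
        hence sf0: "sf j = 2*c0+1" by (simp add: sf_def)
        show "P j i \<in> T \<or> P j (Suc i) \<in> T"
        proof (cases "even i")
          case True
          then obtain p where p: "i = 2*p" by blast
          show ?thesis
          proof (cases "p < c0")
            case True
            hence "P j (Suc i) \<in> \<alpha>0" using \<open>j = 0\<close> p by (auto simp: \<alpha>0_def)
            then show ?thesis by (simp add: T_def \<alpha>_def)
          next
            case False
            hence "Suc i = sf j" using i sf0 p by simp
            hence "P j (Suc i) = real (Suc j) / real k" using Pend[OF j] by simp
            moreover have "real (Suc j) / real k \<in> \<beta>" using j by (intro in\<beta>) auto
            ultimately show ?thesis by (simp add: T_def)
          qed
        next
          case False
          then obtain p where p: "i = 2*p+1" using oddE by blast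
          hence "p < c0" using i sf0 by simp
          hence "P j i \<in> \<alpha>0" using \<open>j = 0\<close> p by (auto simp: \<alpha>0_def)
          then show ?thesis by (simp add: T_def \<alpha>_def)
        qed
      next
        case False
        hence sfj: "sf j = 2 * t j" and j1: "j \<in> {1..<k}" using j by (auto simp: sf_def)
        obtain e where e: "e = i \<or> e = Suc i" "even e" by (cases "even i") (auto, metis even_Suc)
        obtain p where p: "e = 2*p" using e by blast
        have pt: "p \<le> t j" using e p i sfj by auto
        have "P j e \<in> T"
        proof -
          consider "p = 0" | "p = t j" | "0 < p" "p < t j" using pt by linarith
          then show ?thesis
          proof cases
            case 1
            hence "P j e = real j / real k" using p P0 by simp
            moreover have "real j / real k \<in> \<beta>" using j1 by (intro in\<beta>) auto
            ultimately show ?thesis by (simp add: T_def)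
          next
            case 2
            hence "P j e = real (Suc j) / real k" using p sfj Pend[OF j] by simp
            moreover have "real (Suc j) / real k \<in> \<beta>" using j by (intro in\<beta>) auto
            ultimately show ?thesis by (simp add: T_def)
          next
            case 3
            have "e = 2*(p-1)+2" "p - 1 < t j - 1" using 3 p by auto
            hence "P j e \<in> \<alpha>1" using j1 unfolding \<alpha>1_def by blast
            then show ?thesis by (simp add: T_def \<alpha>_def)
          qed
        qed
        then show "P j i \<in> T \<or> P j (Suc i) \<in> T" using e(1) by auto
      qed
    qed
    have "integral {real j / real k..real j / real k + real (sf j) * eta} (dmin T) \<le> real (sf j) * eta^3 / 3"
      by (rule up_seg[OF finT neT eta0 half])
    moreover have "real j / real k + real (sf j) * eta = real (Suc j) / real k"
      using Peq Pend[OF j] by simp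
    moreover have "real (sf j) * eta^3 / 3 = (1/real k)^3 / (3 * (real (sf j))^2)"
      using sfpos[OF j] k by (simp add: eta_def field_simps power2_eq_square power3_eq_cube)
    ultimately show "integral {real j / real k..real (Suc j) / real k} (dmin T) \<le> (1/real k)^3 / (3 * (real (sf j))^2)"
      by simp
  qed
  finally show ?thesis by (simp add: \<beta>_def sf_def)
qed

definition bcnt :: "real set \<Rightarrow> nat \<Rightarrow> nat \<Rightarrow> nat" where
  "bcnt G k j = card (G \<inter> {real j / real k<..<real (Suc j) / real k})"

definition sg :: "real set \<Rightarrow> nat \<Rightarrow> nat \<Rightarrow> nat" where
  "sg G k j = 2 * bcnt G k j + (if \<exists>a\<in>G. a \<le> real j / real k then 2 else 1)"

lemma lower:
  fixes k :: nat and G :: "real set"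
  assumes k: "k \<ge> 1" and G: "finite G" "(\<lambda>j. real j / real k) ` {1..k} \<subseteq> G"
  shows "(\<Sum>j<k. (1/real k)^3 / (3 * (real (sg G k j))^2)) \<le> distortion unif01 G"
proof -
  have neG: "G \<noteq> {}" using G k by auto
  have "distortion unif01 G = integral {0..real k / real k} (dmin G)"
    using k by (simp add: distortion_eq[OF G(1) neG])
  also have "\<dots> = (\<Sum>j<k. integral {real j / real k..real (Suc j) / real k} (dmin G))"
    using int_split[OF G(1) neG, of k k] k by simp
  finally have d: "distortion unif01 G = (\<Sum>j<k. integral {real j / real k..real (Suc j) / real k} (dmin G))" .
  have "(\<Sum>j<k. (1/real k)^3 / (3 * (real (sg G k j))^2)) \<le> (\<Sum>j<k. integral {real j / real k..real (Suc j) / real k} (dmin G))"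
  proof (rule sum_mono)
    fix j assume "j \<in> {..<k}"
    hence j: "j < k" by simp
    have "real (Suc j) / real k \<in> (\<lambda>j. real j / real k) ` {1..k}"
      by (rule image_eqI[where x="Suc j"]) (use j in auto)
    hence vG: "real (Suc j) / real k \<in> G" using G(2) by blast
    have uv: "real j / real k \<le> real (Suc j) / real k" using k by (simp add: divide_right_mono)
    have "(real (Suc j) / real k - real j / real k)^3 / (3 * (2 * real (card (G \<inter> {real j / real k<..<real (Suc j) / real k})) + (if \<exists>a\<in>G. a \<le> real j / real k then 2 else 1))^2)
        \<le> integral {real j / real k..real (Suc j) / real k} (dmin G)"
      by (rule low[OF G(1) vG uv])
    moreover have "real (Suc j) / real k - real j / real k = 1 / real k" by (simp add: add_divide_distrib)
    moreover have "real (sg G k j) = 2 * real (card (G \<inter> {real j / real k<..<real (Suc j) / real k})) + (if \<exists>a\<in>G. a \<le> real j / real k then 2 else 1)"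
      by (simp add: sg_def bcnt_def)
    ultimately show "(1/real k)^3 / (3 * (real (sg G k j))^2) \<le> integral {real j / real k..real (Suc j) / real k} (dmin G)"
      by simp
  qed
  then show ?thesis using d by simp
qed

lemma seg_iff:
  fixes x :: real assumes "k > (0::nat)"
  shows "(real i / real k < x \<and> x < real (Suc i) / real k) \<longleftrightarrow> (real i < x * real k \<and> x * real k < real i + 1)"
  using assms by (simp add: pos_divide_less_eq pos_less_divide_eq add.commute)

lemma count:
  fixes k :: nat and G :: "real set"
  assumes k: "k \<ge> 1" and G: "finite G" "(\<lambda>j. real j / real k) ` {1..k} \<subseteq> G"
  shows "k + (\<Sum>j<k. bcnt G k j) + (if \<exists>a\<in>G. a \<le> 0 then 1 else 0) \<le> card G"
proof -
  define B where "B = (\<lambda>j. real j / real k) ` {1..k}"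
  define Og where "Og j = G \<inter> {real j / real k<..<real (Suc j) / real k}" for j
  define N where "N = G \<inter> {..0}"
  have kpos: "k > 0" using k by simp
  have cardB: "card B = k" using beta_card[OF k] by (simp add: B_def)
  have finOg: "finite (Og j)" for j using G by (simp add: Og_def)
  have Oiff: "x \<in> Og j \<longleftrightarrow> x \<in> G \<and> real j < x * real k \<and> x * real k < real j + 1" for x j
    using seg_iff[OF kpos] by (auto simp: Og_def)
  have Odisj: "Og i \<inter> Og j = {}" if "i \<noteq> j" for i j
  proof (rule ccontr)
    assume "Og i \<inter> Og j \<noteq> {}"
    then obtain x where "x \<in> Og i" "x \<in> Og j" by blast
    hence "real i < x * real k" "x * real k < real i + 1" "real j < x * real k" "x * real k < real j + 1"
      using Oiff by auto
    hence "real i < real j + 1" "real j < real i + 1" by linarith+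
    hence "i < j + 1" "j < i + 1" by linarith+
    then show False using that by linarith
  qed
  have BO: "B \<inter> Og j = {}" for j
  proof (rule ccontr)
    assume "B \<inter> Og j \<noteq> {}"
    then obtain i where i: "i \<in> {1..k}" "real i / real k \<in> Og j" unfolding B_def by blast
    have "real i / real k * real k = real i" using kpos by simp
    hence "real j < real i" "real i < real j + 1" using i(2) Oiff by auto
    hence "j < i" "i < j + 1" by linarith+
    then show False by linarith
  qed
  have BN: "B \<inter> N = {}" using kpos by (auto simp: B_def N_def divide_le_0_iff)
  have ON: "Og j \<inter> N = {}" for j
  proof -
    { fix x assume x: "x \<in> Og j" "x \<in> N"
      have "real j / real k < x" "x \<le> 0" using x by (auto simp: Og_def N_def)
      moreover have "0 \<le> real j / real k" by simp
      ultimately have False by linarith }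
    then show ?thesis by blast
  qed
  have cardUO: "card (\<Union>j<k. Og j) = (\<Sum>j<k. card (Og j))"
    by (rule card_UN_disjoint) (auto simp: finOg Odisj)
  have "card (B \<union> (\<Union>j<k. Og j) \<union> N) = card (B \<union> (\<Union>j<k. Og j)) + card N"
  proof (rule card_Un_disjoint)
    show "finite (B \<union> (\<Union>j<k. Og j))" using finOg by (simp add: B_def)
    show "finite N" using G by (simp add: N_def)
    show "(B \<union> (\<Union>j<k. Og j)) \<inter> N = {}" using BN ON by blast
  qed
  also have "card (B \<union> (\<Union>j<k. Og j)) = card B + card (\<Union>j<k. Og j)"
    by (rule card_Un_disjoint) (use G BO in \<open>auto simp: B_def finOg\<close>)
  finally have cU: "card (B \<union> (\<Union>j<k. Og j) \<union> N) = k + (\<Sum>j<k. bcnt G k j) + card N"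
    using cardB cardUO by (simp add: bcnt_def Og_def)
  have "card (B \<union> (\<Union>j<k. Og j) \<union> N) \<le> card G"
    by (rule card_mono[OF G(1)]) (use G(2) in \<open>auto simp: B_def Og_def N_def\<close>)
  moreover have "(if \<exists>a\<in>G. a \<le> 0 then 1 else 0) \<le> card N"
  proof (cases "\<exists>a\<in>G. a \<le> 0")
    case True
    then have "N \<noteq> {}" by (auto simp: N_def)
    moreover have "finite N" using G by (simp add: N_def)
    ultimately show ?thesis using True by (simp add: Suc_le_eq card_gt_0_iff)
  qed simp
  ultimately show ?thesis using cU by linarith
qed



lemma split0: "k \<ge> (1::nat) \<Longrightarrow> (\<Sum>j<k. f j) = f 0 + (\<Sum>j\<in>{1..<k}. f j)"
  by (simp add: lessThan_atLeast0 sum.atLeast_Suc_lessThan)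

lemma Jkj_Suc: "Jkj k (Suc j) = {real j / real k .. real (Suc j) / real k}"
  by (simp add: Jkj_def)

lemma card_closed2:
  fixes u v :: real
  assumes "finite G" "u \<in> G" "v \<in> G" "u < v"
  shows "card (G \<inter> {u..v}) = card (G \<inter> {u<..<v}) + 2"
proof -
  have "G \<inter> {u..v} = insert u (insert v (G \<inter> {u<..<v}))" using assms by auto
  then show ?thesis using assms by simp
qed

lemma card_closed1:
  fixes u v :: real
  assumes "finite G" "u \<notin> G" "v \<in> G" "u < v"
  shows "card (G \<inter> {u..v}) = card (G \<inter> {u<..<v}) + 1"
proof -
  have "G \<inter> {u..v} = insert v (G \<inter> {u<..<v})" using assms by (auto simp: less_eq_real_def)
  then show ?thesis using assms by simp
qed

theorem theorem4p4:
  fixes k n m l :: nat and \<alpha>n :: "real set"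
  assumes "k \<ge> 1"
    and "n \<ge> k"
    and "n = m * k + l"
    and "l < k"
    and "cond_optimal_set unif01 {real j / real k | j. 1 \<le> j \<and> j \<le> k} n \<alpha>n"
  shows "(l = 0 \<longrightarrow>
            card (\<alpha>n \<inter> Jkj k 1) = m \<and>
            (\<forall>j\<in>{2..k}. card (\<alpha>n \<inter> Jkj k j) = m + 1))
       \<and> (1 \<le> l \<longrightarrow>
            (\<exists>J. J \<subseteq> {2..k} \<and> card J = l - 1 \<and>
                 card (\<alpha>n \<inter> Jkj k 1) = m + 1 \<and>
                 (\<forall>j\<in>J. card (\<alpha>n \<inter> Jkj k j) = m + 2) \<and>
                 (\<forall>j\<in>{2..k} - J. card (\<alpha>n \<inter> Jkj k j) = m + 1)))"
proof -
  note k = assms(1) and nk = assms(2) and nml = assms(3) and lk = assms(4)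
  define \<beta> where "\<beta> = {real j / real k | j. 1 \<le> j \<and> j \<le> k}"
  define G where "G = \<alpha>n"
  have \<beta>eq: "\<beta> = (\<lambda>j. real j / real k) ` {1..k}" unfolding \<beta>_def by (rule beta_eq)
  have card\<beta>: "card \<beta> = k" using beta_card[OF k] \<beta>eq by simp
  have fin\<beta>: "finite \<beta>" by (simp add: \<beta>eq)
  from assms(5) obtain \<alpha> where \<alpha>: "finite \<alpha>" "card \<alpha> \<le> n - card \<beta>" "G = \<alpha> \<union> \<beta>"
    and dist: "distortion unif01 G = cond_quant_error unif01 \<beta> n"
    unfolding cond_optimal_set_def \<beta>_def G_def by blast
  have finG: "finite G" using \<alpha> fin\<beta> by simp
  have sub: "(\<lambda>j. real j / real k) ` {1..k} \<subseteq> G" using \<alpha>(3) \<beta>eq by auto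
  have inG: "real j / real k \<in> G" if "1 \<le> j" "j \<le> k" for j
  proof -
    have "real j / real k \<in> (\<lambda>j. real j / real k) ` {1..k}"
      by (rule image_eqI[where x=j]) (use that in auto)
    then show ?thesis using sub by (rule subsetD[rotated])
  qed
  have cardG: "card G \<le> n"
  proof -
    have "card G \<le> card \<alpha> + card \<beta>" using \<alpha>(3) card_Un_le by simp
    then show ?thesis using \<alpha>(2) card\<beta> nk by linarith
  qed
  have m1: "m \<ge> 1"
  proof (rule ccontr)
    assume "\<not> m \<ge> 1" hence "m = 0" by simp
    then show False using nml lk nk by simp
  qed
  define e :: nat where "e = (if \<exists>a\<in>G. a \<le> 0 then 1 else 0)"
  define b where "b j = bcnt G k j" for j
  have sgj: "sg G k j = 2 * b j + 2" if "j \<in> {1..<k}" for j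
  proof -
    have "real j / real k \<in> G" using that by (intro inG) auto
    then show ?thesis by (auto simp: sg_def b_def)
  qed
  have sg0: "sg G k 0 = 2 * b 0 + 1 + e" by (simp add: sg_def b_def e_def)
  have cnt: "k + (\<Sum>j<k. b j) + e \<le> n" using count[OF k finG sub] cardG by (simp add: b_def e_def)
  have sumsg: "sg G k 0 + (\<Sum>j\<in>{1..<k}. sg G k j) \<le> 2 * n - 1"
  proof -
    have "(\<Sum>j\<in>{1..<k}. sg G k j) = (\<Sum>j\<in>{1..<k}. 2 * b j + 2)" using sgj by (rule sum.cong[OF refl])
    also have "\<dots> = (\<Sum>j\<in>{1..<k}. 2 * b j) + (\<Sum>j\<in>{1..<k}. 2)" by (rule sum.distrib)
    also have "\<dots> = 2 * (\<Sum>j\<in>{1..<k}. b j) + 2 * (k - 1)" by (simp add: sum_distrib_left)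
    finally have "sg G k 0 + (\<Sum>j\<in>{1..<k}. sg G k j) = 2 * (b 0 + (\<Sum>j\<in>{1..<k}. b j)) + 2 * (k - 1) + 1 + e"
      using sg0 by simp
    moreover have "b 0 + (\<Sum>j\<in>{1..<k}. b j) = (\<Sum>j<k. b j)" by (rule split0[OF k, symmetric])
    moreover have "e \<le> 1" by (simp add: e_def)
    ultimately show ?thesis using cnt k by arith
  qed
  have sg0pos: "sg G k 0 \<ge> 1" by (simp add: sg0)
  have sgev: "\<forall>j\<in>{1..<k}. even (sg G k j) \<and> sg G k j \<ge> 2" using sgj by auto
  define h :: real where "h = (1 / real k)^3 / 3"
  have hpos: "h > 0" using k by (simp add: h_def)
  have resc: "(\<Sum>j<k. (1/real k)^3 / (3 * (real (f j))^2)) = h * (\<Sum>j<k. 1 / (real (f j))^2)" for f :: "nat \<Rightarrow> nat"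
    by (simp add: h_def sum_distrib_left)
  have low: "h * (\<Sum>j<k. 1 / (real (sg G k j))^2) \<le> cond_quant_error unif01 \<beta> n"
    using lower[OF k finG sub] dist resc[of "sg G k"] by simp
  have sgfacts: "sg G k 0 = 2*b 0 + 1 \<and> e = 0" if "odd (sg G k 0)"
    using that sg0 by (auto simp: e_def split: if_splits)
  have noneg: "0 \<notin> G" if "e = 0" using that unfolding e_def by (auto split: if_splits)
  have card1: "card (G \<inter> Jkj k 1) = b 0 + 1" if "e = 0"
  proof -
    have "card (G \<inter> {real 0 / real k .. real (Suc 0) / real k}) = card (G \<inter> {real 0 / real k<..<real (Suc 0) / real k}) + 1"
      by (rule card_closed1[OF finG]) (use noneg[OF that] inG[of 1] k in auto)
    then show ?thesis using Jkj_Suc[of k 0] by (simp add: b_def bcnt_def)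
  qed
  have cardj: "card (G \<inter> Jkj k (Suc j)) = b j + 2" if "j \<in> {1..<k}" for j
  proof -
    have "card (G \<inter> {real j / real k .. real (Suc j) / real k}) = card (G \<inter> {real j / real k<..<real (Suc j) / real k}) + 2"
      by (rule card_closed2[OF finG]) (use that inG[of j] inG[of "Suc j"] k in \<open>auto simp: divide_strict_right_mono\<close>)
    then show ?thesis using Jkj_Suc[of k j] by (simp add: b_def bcnt_def)
  qed
  have sucj: "\<exists>j'. j = Suc j' \<and> j' \<in> {1..<k}" if "j \<in> {2..k}" for j
    using that by (intro exI[of _ "j - 1"]) auto
  show ?thesis
  proof (rule conjI; rule impI)
    assume l0: "l = 0"
    have up: "cond_quant_error unif01 \<beta> n \<le> (\<Sum>j<k. (1/real k)^3 / (3 * (real (if j = 0 then 2*(m-1)+1 else 2 * m))^2))"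
      unfolding \<beta>_def
    proof (rule upper[OF k nk])
      show "\<forall>j\<in>{1..<k}. m \<ge> 1" using m1 by simp
      have "(\<Sum>j\<in>{1..<k}. m - 1) = (k - 1) * (m - 1)" by simp
      moreover have "(m - 1) + (k - 1) * (m - 1) = k * (m - 1)" using k by (cases k) auto
      moreover have "k * (m - 1) = n - k" using nml l0 by (simp add: diff_mult_distrib2 mult.commute)
      ultimately show "(m - 1) + (\<Sum>j\<in>{1..<k}. m - 1) \<le> n - k" by simp
    qed
    have "h * (\<Sum>j<k. 1 / (real (sg G k j))^2) \<le> h * (\<Sum>j<k. 1 / (real (if j = 0 then 2*(m-1)+1 else 2 * m))^2)"
      using low up resc[of "\<lambda>j. if j = 0 then 2*(m-1)+1 else 2 * m"] by linarith
    hence "(\<Sum>j<k. 1 / (real (sg G k j))^2) \<le> (\<Sum>j<k. 1 / (real (if j = 0 then 2*(m-1)+1 else 2 * m))^2)"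
      using hpos by (simp add: mult_le_cancel_left_pos)
    also have "\<dots> = 1 / (real (2*(m-1)+1))^2 + (\<Sum>j\<in>{1..<k}. 1 / (real (if j = 0 then 2*(m-1)+1 else 2 * m))^2)"
      using split0[OF k, of "\<lambda>j. 1 / (real (if j = 0 then 2*(m-1)+1 else 2 * m))^2"] by simp
    also have "(\<Sum>j\<in>{1..<k}. 1 / (real (if j = 0 then 2*(m-1)+1 else 2 * m))^2) = (\<Sum>j\<in>{1..<k}. 1 / (2 * real m)^2)"
      by (rule sum.cong) auto
    also have "\<dots> = real (k - 1) / (2 * real m)^2" by simp
    also have "real (2*(m-1)+1) = 2 * real m - 1" using m1 by (simp add: of_nat_diff)
    finally have val0: "(\<Sum>j<k. 1 / (real (sg G k j))^2) \<le> 1 / (2 * real m - 1)^2 + real (k - 1) / (2 * real m)^2" .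
    have val: "1 / (real (sg G k 0))^2 + (\<Sum>j\<in>{1..<k}. 1 / (real (sg G k j))^2) \<le> 1 / (2 * real m - 1)^2 + real (k - 1) / (2 * real m)^2"
      using val0 split0[OF k, of "\<lambda>j. 1 / (real (sg G k j))^2"] by simp
    have "2*m*((k-1)+1) - 1 = 2 * n - 1" using k nml l0 by simp
    hence s2: "sg G k 0 + (\<Sum>j\<in>{1..<k}. sg G k j) \<le> 2*m*((k-1)+1) - 1" using sumsg by simp
    have c0: "sg G k 0 = 2*m - 1 \<and> (\<forall>j\<in>{1..<k}. sg G k j = 2*m)"
      by (rule comb0[OF _ _ m1 sg0pos sgev s2 val]) auto
    have "2*m - 1 = 2*(m-1) + 1" using m1 by simp
    hence "odd (sg G k 0)" using c0 by simp
    hence e0: "e = 0" and b0: "2 * b 0 + 1 = 2*m - 1" using sgfacts c0 by auto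
    have "card (\<alpha>n \<inter> Jkj k 1) = m" using card1[OF e0] b0 m1 by (simp add: G_def)
    moreover have "card (\<alpha>n \<inter> Jkj k j) = m + 1" if j: "j \<in> {2..k}" for j
    proof -
      obtain j' where j': "j = Suc j'" "j' \<in> {1..<k}" using sucj[OF j] by blast
      have "2 * b j' + 2 = 2 * m" using sgj[OF j'(2)] c0 j'(2) by simp
      then show ?thesis using cardj[OF j'(2)] j' m1 by (simp add: G_def)
    qed
    ultimately show "card (\<alpha>n \<inter> Jkj k 1) = m \<and> (\<forall>j\<in>{2..k}. card (\<alpha>n \<inter> Jkj k j) = m + 1)"
      by blast
  next
    assume l1: "1 \<le> l"
    define t where "t j = (if j < l then m+1 else m)" for j
    have split_l: "(\<Sum>j\<in>{1..<k}. f (t j)) = real (l - 1) * f (m+1) + real (k - l) * f m" for f :: "nat \<Rightarrow> real"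
    proof -
      have "(\<Sum>j\<in>{1..<k}. f (t j)) = (\<Sum>j\<in>{1..<l}. f (t j)) + (\<Sum>j\<in>{l..<k}. f (t j))"
        using l1 lk by (simp add: sum.atLeastLessThan_concat)
      also have "(\<Sum>j\<in>{1..<l}. f (t j)) = (\<Sum>j\<in>{1..<l}. f (m+1))" by (rule sum.cong) (auto simp: t_def)
      also have "(\<Sum>j\<in>{l..<k}. f (t j)) = (\<Sum>j\<in>{l..<k}. f m)" by (rule sum.cong) (auto simp: t_def)
      finally show ?thesis by simp
    qed
    have split_ln: "(\<Sum>j\<in>{1..<k}. g (t j)) = (l - 1) * g (m+1) + (k - l) * g m" for g :: "nat \<Rightarrow> nat"
    proof -
      have "(\<Sum>j\<in>{1..<k}. g (t j)) = (\<Sum>j\<in>{1..<l}. g (t j)) + (\<Sum>j\<in>{l..<k}. g (t j))"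
        using l1 lk by (simp add: sum.atLeastLessThan_concat)
      also have "(\<Sum>j\<in>{1..<l}. g (t j)) = (\<Sum>j\<in>{1..<l}. g (m+1))" by (rule sum.cong) (auto simp: t_def)
      also have "(\<Sum>j\<in>{l..<k}. g (t j)) = (\<Sum>j\<in>{l..<k}. g m)" by (rule sum.cong) (auto simp: t_def)
      finally show ?thesis by simp
    qed
    have up: "cond_quant_error unif01 \<beta> n \<le> (\<Sum>j<k. (1/real k)^3 / (3 * (real (if j = 0 then 2*m+1 else 2 * t j))^2))"
      unfolding \<beta>_def
    proof (rule upper[OF k nk])
      show "\<forall>j\<in>{1..<k}. t j \<ge> 1" using m1 by (simp add: t_def)
      obtain m' where m': "m = Suc m'" using m1 by (cases m) auto
      obtain l' where l': "l = Suc l'" using l1 by (cases l) auto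
      obtain r where r: "k = l + r" using lk by (metis less_imp_add_positive)
      have "(\<Sum>j\<in>{1..<k}. t j - 1) = (l - 1) * (m + 1 - 1) + (k - l) * (m - 1)"
        using split_ln[of "\<lambda>x. x - 1"] by simp
      also have "\<dots> = l' * Suc m' + r * m'" using m' l' r by simp
      finally have s: "(\<Sum>j\<in>{1..<k}. t j - 1) = l' * Suc m' + r * m'" .
      have "n = k + (m' * k + l)" using nml m' by simp
      hence "n - k = m' * k + l" by simp
      then show "m + (\<Sum>j\<in>{1..<k}. t j - 1) \<le> n - k" using s m' l' r by (simp add: algebra_simps)
    qed
    have "h * (\<Sum>j<k. 1 / (real (sg G k j))^2) \<le> h * (\<Sum>j<k. 1 / (real (if j = 0 then 2*m+1 else 2 * t j))^2)"
      using low up resc[of "\<lambda>j. if j = 0 then 2*m+1 else 2 * t j"] by linarith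
    hence "(\<Sum>j<k. 1 / (real (sg G k j))^2) \<le> (\<Sum>j<k. 1 / (real (if j = 0 then 2*m+1 else 2 * t j))^2)"
      using hpos by (simp add: mult_le_cancel_left_pos)
    also have "\<dots> = 1 / (real (2*m+1))^2 + (\<Sum>j\<in>{1..<k}. 1 / (real (if j = 0 then 2*m+1 else 2 * t j))^2)"
      using split0[OF k, of "\<lambda>j. 1 / (real (if j = 0 then 2*m+1 else 2 * t j))^2"] by simp
    also have "(\<Sum>j\<in>{1..<k}. 1 / (real (if j = 0 then 2*m+1 else 2 * t j))^2) = (\<Sum>j\<in>{1..<k}. 1 / (real (2 * t j))^2)"
      by (rule sum.cong) auto
    also have "\<dots> = real (l - 1) * (1 / (real (2 * (m+1)))^2) + real (k - l) * (1 / (real (2 * m))^2)"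
      by (rule split_l)
    finally have val0: "(\<Sum>j<k. 1 / (real (sg G k j))^2) \<le>
        1/(2*real m + 1)^2 + real (l - 1)/(2*real m + 2)^2 + real (k - 1 + 1 - l)/(2*real m)^2"
      using k by (simp add: algebra_simps)
    have val: "1 / (real (sg G k 0))^2 + (\<Sum>j\<in>{1..<k}. 1 / (real (sg G k j))^2) \<le>
        1/(2*real m + 1)^2 + real (l - 1)/(2*real m + 2)^2 + real (k - 1 + 1 - l)/(2*real m)^2"
      using val0 split0[OF k, of "\<lambda>j. 1 / (real (sg G k j))^2"] by simp
    have "2*m*((k-1)+1) + 2*l - 1 = 2 * n - 1" using k nml by simp
    hence s2: "sg G k 0 + (\<Sum>j\<in>{1..<k}. sg G k j) \<le> 2*m*((k-1)+1) + 2*l - 1" using sumsg by simp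
    have c1: "sg G k 0 = 2*m + 1 \<and> (\<forall>j\<in>{1..<k}. sg G k j = 2*m \<or> sg G k j = 2*m + 2) \<and>
        card {j\<in>{1..<k}. sg G k j = 2*m + 2} = l - 1"
      by (rule comb1[OF _ _ m1 l1 _ sg0pos sgev s2 val]) (use lk in auto)
    hence "odd (sg G k 0)" by simp
    hence e0: "e = 0" and b0: "2 * b 0 + 1 = 2*m + 1" using sgfacts c1 by auto
    define J where "J = Suc ` {j\<in>{1..<k}. sg G k j = 2*m + 2}"
    have "J \<subseteq> {2..k}" by (auto simp: J_def)
    moreover have "card J = l - 1" using c1 by (simp add: J_def card_image)
    moreover have "card (\<alpha>n \<inter> Jkj k 1) = m + 1" using card1[OF e0] b0 by (simp add: G_def)
    moreover have "card (\<alpha>n \<inter> Jkj k j) = m + 2" if j: "j \<in> J" for j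
    proof -
      obtain j' where j': "j = Suc j'" "j' \<in> {1..<k}" "sg G k j' = 2*m + 2" using j by (auto simp: J_def)
      have "2 * b j' + 2 = 2 * m + 2" using sgj[OF j'(2)] j'(3) by simp
      then show ?thesis using cardj[OF j'(2)] j' by (simp add: G_def)
    qed
    moreover have "card (\<alpha>n \<inter> Jkj k j) = m + 1" if j: "j \<in> {2..k} - J" for j
    proof -
      obtain j' where j': "j = Suc j'" "j' \<in> {1..<k}" using sucj j by blast
      have "sg G k j' \<noteq> 2*m + 2" using j j' by (auto simp: J_def)
      hence "sg G k j' = 2*m" using c1 j'(2) by blast
      hence "2 * b j' + 2 = 2 * m" using sgj[OF j'(2)] by simp
      then show ?thesis using cardj[OF j'(2)] j' m1 by (simp add: G_def)
    qed
    ultimately show "\<exists>J. J \<subseteq> {2..k} \<and> card J = l - 1 \<and> card (\<alpha>n \<inter> Jkj k 1) = m + 1 \<and>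
        (\<forall>j\<in>J. card (\<alpha>n \<inter> Jkj k j) = m + 2) \<and> (\<forall>j\<in>{2..k} - J. card (\<alpha>n \<inter> Jkj k j) = m + 1)"
      by blast
  qed
qed

end
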